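(* Let $k,s$ be integers with $k\geq 3$ and $s\geq 3$. Then: (1) If $3\leq k\leq \binom{s-1}{\lceil (s-1)/2\rceil}+1$, then $\mathrm{GR}_{k}(\mathcal{C}_3:\mathcal{C}_s)=s$. (2) If $k>\binom{s-1}{\lceil (s-1)/2\rceil}+1$, then the pair $(\mathcal{C}_3,\mathcal{C}_s)$ is $(\mathcal{C}_3:\mathcal{C}_s)_k$-good.
   Context: $\mathcal{B}_N$ denotes the Boolean lattice of all subsets of $[N]=\{1,\dots,N\}$ ordered by inclusion. For posets $\mathcal{P},\mathcal{Q}$, an induced copy of $\mathcal{P}$ in $\mathcal{Q}$ is the image of an injection $f:\mathcal{P}\to\mathcal{Q}$ with $f(X)\le f(Y)$ iff $X\le Y$. $\mathcal{C}_t$ is the $t$-element chain. A coloring of $\mathcal{B}_N$ is an assignment of colors to its sets; a $k$-coloring is exact if it uses colors from $[k]$ and every color in $[k]$ is used at least once. A colored subfamily is monochromatic if all its sets have the same color and rainbow if all its sets have pairwise distinct colors. The pair $(\mathcal{Q},\mathcal{P})$ is $(\mathcal{Q}:\mathcal{P})_k$-good if for every positive integer $N$, every exact $k$-coloring of $\mathcal{B}_N$ contains a rainbow induced copy of $\mathcal{Q}$ or a monochromatic induced copy of $\mathcal{P}$. For a pair that is not $(\mathcal{Q}:\mathcal{P})_k$-good, the Boolean Gallai–Ramsey number $\mathrm{GR}_k(\mathcal{Q}:\mathcal{P})$ is the smallest integer $n$ such that for every $N\ge n$, every exact $k$-coloring of $\mathcal{B}_N$ contains a rainbow induced copy of $\mathcal{Q}$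 or a monochromatic induced copy of $\mathcal{P}$. *)

theory Defs
  imports Complex_Main
begin

definition boolean_lattice :: "nat \<Rightarrow> nat set set" where
  "boolean_lattice N = Pow {1..N}"

definition exact_coloring :: "nat \<Rightarrow> nat \<Rightarrow> (nat set \<Rightarrow> nat) \<Rightarrow> bool" where
  "exact_coloring k N c \<longleftrightarrow>
     (\<forall>X\<in>boolean_lattice N. c X \<in> {1..k}) \<and>
     (\<forall>i\<in>{1..k}. \<exists>X\<in>boolean_lattice N. c X = i)"

definition induced_chain_copy :: "nat \<Rightarrow> nat \<Rightarrow> nat set set \<Rightarrow> bool" where
  "induced_chain_copy t N F \<longleftrightarrow>
     (\<exists>f. inj_on f {0..<t} \<and> f ` {0..<t} \<subseteq> boolean_lattice N \<and>
          (\<forall>i\<in>{0..<t}. \<forall>j\<in>{0..<t}. (f i \<subseteq> f j \<longleftrightarrow> i \<le> j)) \<and>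
          F = f ` {0..<t})"

definition monochromatic :: "(nat set \<Rightarrow> nat) \<Rightarrow> nat set set \<Rightarrow> bool" where
  "monochromatic c F \<longleftrightarrow> (\<forall>X\<in>F. \<forall>Y\<in>F. c X = c Y)"

definition rainbow :: "(nat set \<Rightarrow> nat) \<Rightarrow> nat set set \<Rightarrow> bool" where
  "rainbow c F \<longleftrightarrow> (\<forall>X\<in>F. \<forall>Y\<in>F. X \<noteq> Y \<longrightarrow> c X \<noteq> c Y)"

definition GR_prop :: "nat \<Rightarrow> nat \<Rightarrow> nat \<Rightarrow> nat \<Rightarrow> bool" where
  "GR_prop k q p N \<longleftrightarrow>
     (\<forall>c. exact_coloring k N c \<longrightarrow>
        (\<exists>F. induced_chain_copy q N F \<and> rainbow c F) \<or>
        (\<exists>F. induced_chain_copy p N F \<and> monochromatic c F))"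

definition chain_good :: "nat \<Rightarrow> nat \<Rightarrow> nat \<Rightarrow> bool" where
  "chain_good k q p \<longleftrightarrow> (\<forall>N\<ge>1. GR_prop k q p N)"

text \<open>Boolean Gallai-Ramsey number GR_k(C_q : C_p) (meaningful for non-good pairs).\<close>
definition GR_chain :: "nat \<Rightarrow> nat \<Rightarrow> nat \<Rightarrow> nat" where
  "GR_chain k q p = (LEAST n. \<forall>N\<ge>n. N \<ge> 1 \<longrightarrow> GR_prop k q p N)"

end

theory Submission
  imports Defs "HOL-Combinatorics.Multiset_Permutations"
begin

lemma rainbow3:
  assumes "P \<subset> Q" "Q \<subset> R" "R \<subseteq> {1..N}" "c P \<noteq> c Q" "c Q \<noteq> c R" "c P \<noteq> c R"
  shows "\<exists>F. induced_chain_copy 3 N F \<and> rainbow c F"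
proof -
  define f where "f = (\<lambda>i::nat. if i = 0 then P else if i = 1 then Q else R)"
  have e: "{0..<3::nat} = {0,1,2}" by auto
  have img: "f ` {0..<3} = {P,Q,R}" unfolding e f_def by auto
  have "induced_chain_copy 3 N {P,Q,R}"
    unfolding induced_chain_copy_def
  proof (intro exI[of _ f] conjI)
    show "inj_on f {0..<3}" unfolding e f_def inj_on_def using assms by auto
    show "f ` {0..<3} \<subseteq> boolean_lattice N" unfolding img boolean_lattice_def using assms by auto
    show "\<forall>i\<in>{0..<3}. \<forall>j\<in>{0..<3}. (f i \<subseteq> f j) = (i \<le> j)"
      unfolding e f_def using assms by auto
    show "{P,Q,R} = f ` {0..<3}" using img by simp
  qed
  moreover have "rainbow c {P,Q,R}" unfolding rainbow_def using assms by auto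
  ultimately show ?thesis by blast
qed

lemma third_color:
  assumes "k \<ge> (3::nat)" shows "\<exists>i\<in>{1..k}. i \<noteq> u \<and> i \<noteq> v"
proof -
  have m: "1 \<in> {1..k}" "2 \<in> {1..k}" "3 \<in> {1..k}" using assms by auto
  show ?thesis
  proof (cases "1 \<noteq> u \<and> 1 \<noteq> v")
    case True then show ?thesis using m by blast
  next
    case F1: False
    show ?thesis
    proof (cases "2 \<noteq> u \<and> 2 \<noteq> v")
      case True then show ?thesis using m by blast
    next
      case False
      then have "3 \<noteq> u \<and> 3 \<noteq> v" using F1 by auto
      then show ?thesis using m by blast
    qed
  qed
qed

lemma struct1:
  assumes ex: "exact_coloring k N c" and k: "k \<ge> 3"
    and nr: "\<not>(\<exists>F. induced_chain_copy 3 N F \<and> rainbow c F)"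
  shows "c {} = c {1..N}"
proof (rule ccontr)
  assume ne: "c {} \<noteq> c {1..N}"
  have "\<exists>i\<in>{1..k}. i \<noteq> c {} \<and> i \<noteq> c {1..N}"
    using third_color[OF k] by blast
  then obtain i where i: "i \<in> {1..k}" "i \<noteq> c {}" "i \<noteq> c {1..N}" by blast
  with ex obtain X where X: "X \<subseteq> {1..N}" "c X = i"
    unfolding exact_coloring_def boolean_lattice_def by blast
  have "{} \<subset> X" using X i by auto
  moreover have "X \<subset> {1..N}" using X i by auto
  ultimately show False using rainbow3[of "{}" X "{1..N}" N c] nr X i ne by auto
qed

lemma struct2:
  assumes nr: "\<not>(\<exists>F. induced_chain_copy 3 N F \<and> rainbow c F)"
    and "P \<subset> Q" "Q \<subseteq> {1..N}" "c P \<noteq> c {}" "c Q \<noteq> c {}"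
  shows "c P = c Q"
proof (rule ccontr)
  assume "c P \<noteq> c Q"
  moreover have "{} \<subset> P" using assms by auto
  ultimately show False using rainbow3[of "{}" P Q N c] nr assms by auto
qed

lemma prefix_card:
  assumes "distinct L" "i \<le> length L"
  shows "card (set (take i L)) = i"
  using assms by (simp add: distinct_card)

lemma prefix_order:
  assumes "distinct L" "i \<le> length L" "j \<le> length L"
  shows "set (take i L) \<subseteq> set (take j L) \<longleftrightarrow> i \<le> j"
proof
  assume "set (take i L) \<subseteq> set (take j L)"
  then have "card (set (take i L)) \<le> card (set (take j L))" by (intro card_mono) auto
  then show "i \<le> j" using prefix_card[OF assms(1,2)] prefix_card[OF assms(1,3)] by simp
next
  assume "i \<le> j" then show "set (take i L) \<subseteq> set (take j L)"
    by (rule set_take_subset_set_take)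
qed

lemma mono_chain:
  assumes ex: "exact_coloring k N c" and k: "k \<ge> 3"
    and top: "c {} = c {1..N}"
    and comp: "\<And>P Q. P \<subset> Q \<Longrightarrow> Q \<subseteq> {1..N} \<Longrightarrow> c P \<noteq> c {} \<Longrightarrow> c Q \<noteq> c {} \<Longrightarrow> c P = c Q"
    and sN: "s \<le> N"
  shows "\<exists>F. induced_chain_copy s N F \<and> monochromatic c F"
proof -
  define a where "a = c {}"
  obtain i where i: "i \<in> {1..k}" "i \<noteq> a" using third_color[OF k, of a a] by blast
  obtain j where j: "j \<in> {1..k}" "j \<noteq> a" "j \<noteq> i" using third_color[OF k, of a i] by blast
  have surj: "\<forall>i\<in>{1..k}. \<exists>X\<in>Pow {1..N}. c X = i"
    using ex unfolding exact_coloring_def boolean_lattice_def by (rule conjunct2)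
  obtain Xi where Xi: "Xi \<subseteq> {1..N}" "c Xi = i"
    using bspec[OF surj i(1)] by blast
  obtain Xj where Xj: "Xj \<subseteq> {1..N}" "c Xj = j"
    using bspec[OF surj j(1)] by blast
  define Pr where "Pr = (\<lambda>p. fst p \<subseteq> {1..N} \<and> snd p \<subseteq> {1..N} \<and> c (fst p) \<noteq> a
        \<and> c (snd p) \<noteq> a \<and> c (fst p) \<noteq> c (snd p))"
  define m where "m = (\<lambda>p::nat set \<times> nat set. card ((fst p - snd p) \<union> (snd p - fst p)))"
  have "Pr (Xi, Xj)" unfolding Pr_def using Xi Xj i j by auto
  then obtain p where p: "Pr p" and pmin: "\<And>q. Pr q \<Longrightarrow> m p \<le> m q"
    using ex_has_least_nat[of Pr "(Xi, Xj)" m] by blast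
  obtain X Y where XY: "p = (X, Y)" by (cases p)
  have X: "X \<subseteq> {1..N}" "c X \<noteq> a" and Y: "Y \<subseteq> {1..N}" "c Y \<noteq> a" and XYc: "c X \<noteq> c Y"
    using p unfolding XY Pr_def by auto
  have minXY: "\<And>Z W. Z \<subseteq> {1..N} \<Longrightarrow> W \<subseteq> {1..N} \<Longrightarrow> c Z \<noteq> a \<Longrightarrow> c W \<noteq> a \<Longrightarrow> c Z \<noteq> c W
      \<Longrightarrow> card ((X - Y) \<union> (Y - X)) \<le> card ((Z - W) \<union> (W - Z))"
  proof -
    fix Z W assume "Z \<subseteq> {1..N}" "W \<subseteq> {1..N}" "c Z \<noteq> a" "c W \<noteq> a" "c Z \<noteq> c W"
    then have "Pr (Z, W)" unfolding Pr_def by auto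
    from pmin[OF this] show "card ((X - Y) \<union> (Y - X)) \<le> card ((Z - W) \<union> (W - Z))"
      unfolding m_def XY by simp
  qed
  have nXY: "\<not> X \<subseteq> Y"
  proof
    assume "X \<subseteq> Y"
    moreover have "X \<noteq> Y" using XYc by auto
    ultimately have "X \<subset> Y" by auto
    then show False using comp[of X Y] X Y XYc a_def by auto
  qed
  have nYX: "\<not> Y \<subseteq> X"
  proof
    assume "Y \<subseteq> X"
    moreover have "X \<noteq> Y" using XYc by auto
    ultimately have "Y \<subset> X" by auto
    then show False using comp[of Y X] X Y XYc a_def by auto
  qed
  have fin: "finite ((X - Y) \<union> (Y - X))" using X Y finite_subset by blast
  have good: "c Z = a" if Z: "Z \<subseteq> {1..N}" "card Z \<noteq> card X"
    and cases: "Z \<subseteq> X \<inter> Y \<or> (X \<inter> Y \<subseteq> Z \<and> Z \<subseteq> X) \<or> (X \<subseteq> Z \<and> Z \<subseteq> X \<union> Y) \<or> X \<union> Y \<subseteq> Z" for Z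
  proof (rule ccontr)
    assume cZ: "c Z \<noteq> a"
    have ZX: "Z \<noteq> X" using Z by auto
    consider (A) "Z \<subseteq> X \<inter> Y" | (B) "X \<inter> Y \<subseteq> Z" "Z \<subseteq> X" | (C) "X \<subseteq> Z" "Z \<subseteq> X \<union> Y" | (D) "X \<union> Y \<subseteq> Z"
      using cases by blast
    then show False
    proof cases
      case A
      have "Z \<subset> X" using A ZX by auto
      then have "c Z = c X" using comp[of Z X] X cZ a_def by auto
      moreover have "Z \<subset> Y" using A nYX by auto
      then have "c Z = c Y" using comp[of Z Y] Y cZ a_def by auto
      ultimately show False using XYc by simp
    next
      case B
      have "Z \<subset> X" using B ZX by auto
      then have cz: "c Z = c X" using comp[of Z X] X cZ a_def by auto
      have "card ((X - Y) \<union> (Y - X)) \<le> card ((Z - Y) \<union> (Y - Z))"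
        using minXY[of Z Y] Z Y cZ cz XYc by auto
      moreover have "(Z - Y) \<union> (Y - Z) \<subset> (X - Y) \<union> (Y - X)"
      proof -
        obtain x where x: "x \<in> X" "x \<notin> Z" using \<open>Z \<subset> X\<close> by blast
        have sub: "(Z - Y) \<union> (Y - Z) \<subseteq> (X - Y) \<union> (Y - X)" using B by blast
        have "x \<notin> Y" using x B by blast
        then have "x \<in> (X - Y) \<union> (Y - X)" "x \<notin> (Z - Y) \<union> (Y - Z)" using x by auto
        then show ?thesis using sub by blast
      qed
      then have "card ((Z - Y) \<union> (Y - Z)) < card ((X - Y) \<union> (Y - X))"
        by (rule psubset_card_mono[OF fin])
      ultimately show False by simp
    next
      case C
      have "X \<subset> Z" using C ZX by auto
      then have cz: "c Z = c X" using comp[of X Z] Z X cZ a_def by auto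
      have "card ((X - Y) \<union> (Y - X)) \<le> card ((Z - Y) \<union> (Y - Z))"
        using minXY[of Z Y] Z Y cZ cz XYc by auto
      moreover have "(Z - Y) \<union> (Y - Z) \<subset> (X - Y) \<union> (Y - X)"
      proof -
        obtain x where x: "x \<in> Z" "x \<notin> X" using \<open>X \<subset> Z\<close> by blast
        have sub: "(Z - Y) \<union> (Y - Z) \<subseteq> (X - Y) \<union> (Y - X)" using C by blast
        have "x \<in> Y" using x C by blast
        then have "x \<in> (X - Y) \<union> (Y - X)" "x \<notin> (Z - Y) \<union> (Y - Z)" using x by auto
        then show ?thesis using sub by blast
      qed
      then have "card ((Z - Y) \<union> (Y - Z)) < card ((X - Y) \<union> (Y - X))"
        by (rule psubset_card_mono[OF fin])
      ultimately show False by simp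
    next
      case D
      have "X \<subset> Z" using D nYX by auto
      then have "c Z = c X" using comp[of X Z] Z X cZ a_def by auto
      moreover have "Y \<subset> Z" using D nXY by auto
      then have "c Z = c Y" using comp[of Y Z] Z Y cZ a_def by auto
      ultimately show False using XYc by simp
    qed
  qed
  define L1 where "L1 = sorted_list_of_set (X \<inter> Y)"
  define L2 where "L2 = sorted_list_of_set (X - Y)"
  define L3 where "L3 = sorted_list_of_set (Y - X)"
  define L4 where "L4 = sorted_list_of_set ({1..N} - (X \<union> Y))"
  define L where "L = L1 @ L2 @ L3 @ L4"
  have fX: "finite X" and fY: "finite Y" using X Y finite_subset by auto
  have setL: "set L = {1..N}" unfolding L_def L1_def L2_def L3_def L4_def using fX fY X Y by auto
  have distL: "distinct L" unfolding L_def L1_def L2_def L3_def L4_def using fX fY by auto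
  have lenL: "length L = N" using distinct_card[OF distL] setL by simp
  define P where "P = (\<lambda>i. set (take i L))"
  define n1 where "n1 = length L1"
  define n2 where "n2 = length L1 + length L2"
  define n3 where "n3 = length L1 + length L2 + length L3"
  have P1: "P n1 = X \<inter> Y" unfolding P_def n1_def L_def L1_def using fX by simp
  have P2: "P n2 = X" unfolding P_def n2_def L_def L1_def L2_def using fX by auto
  have P3: "P n3 = X \<union> Y" unfolding P_def n3_def L_def L1_def L2_def L3_def using fX fY by auto
  have n12: "n1 \<le> n2" "n2 \<le> n3" "n3 \<le> N" unfolding n1_def n2_def n3_def using lenL L_def by auto
  have cX: "card X = n2" using P2 prefix_card[OF distL, of n2] n12 lenL unfolding P_def by simp
  have Pa: "c (P i) = a" if "i \<le> N" "i \<noteq> n2" for i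
  proof (rule good)
    have "set (take i L) \<subseteq> set L" by (rule set_take_subset)
    then show "P i \<subseteq> {1..N}" unfolding P_def using setL by simp
    show "card (P i) \<noteq> card X" using prefix_card[OF distL, of i] that lenL cX unfolding P_def by simp
    have mono: "\<And>u v. u \<le> v \<Longrightarrow> P u \<subseteq> P v" unfolding P_def by (rule set_take_subset_set_take)
    show "P i \<subseteq> X \<inter> Y \<or> (X \<inter> Y \<subseteq> P i \<and> P i \<subseteq> X) \<or> (X \<subseteq> P i \<and> P i \<subseteq> X \<union> Y) \<or> X \<union> Y \<subseteq> P i"
    proof (cases "i \<le> n1")
      case True
      have "P i \<subseteq> X \<inter> Y" using mono[OF True] unfolding P1 .
      then show ?thesis by (rule disjI1)
    next
      case F1: False
      show ?thesis
      proof (cases "i \<le> n2")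
        case True
        have "P i \<subseteq> X" using mono[OF True] unfolding P2 .
        moreover have "X \<inter> Y \<subseteq> P i" using mono[of n1 i] F1 unfolding P1 by simp
        ultimately show ?thesis by simp
      next
        case F2: False
        show ?thesis
        proof (cases "i \<le> n3")
          case True
          have "P i \<subseteq> X \<union> Y" using mono[OF True] unfolding P3 .
          moreover have "X \<subseteq> P i" using mono[of n2 i] F2 unfolding P2 by simp
          ultimately show ?thesis by simp
        next
          case False
          have "X \<union> Y \<subseteq> P i" using mono[of n3 i] False unfolding P3 by simp
          then show ?thesis by simp
        qed
      qed
    qed
  qed
  define g where "g = (\<lambda>j::nat. if j < n2 then j else Suc j)"
  define f where "f = (\<lambda>j. P (g j))"
  have gle: "g u \<le> g v \<longleftrightarrow> u \<le> v" for u v unfolding g_def by auto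
  have gN: "g u \<le> N" "g u \<noteq> n2" if "u < s" for u using that sN unfolding g_def by auto
  have ford: "f u \<subseteq> f v \<longleftrightarrow> u \<le> v" if "u < s" "v < s" for u v
    unfolding f_def P_def using prefix_order[OF distL] gN[OF that(1)] gN[OF that(2)] lenL gle by simp
  have "induced_chain_copy s N (f ` {0..<s})"
    unfolding induced_chain_copy_def
  proof (intro exI[of _ f] conjI)
    show "inj_on f {0..<s}"
      unfolding inj_on_def using ford by (metis atLeastLessThan_iff order_antisym order_refl)
    show "f ` {0..<s} \<subseteq> boolean_lattice N"
      unfolding boolean_lattice_def f_def P_def using setL set_take_subset by fastforce
    show "\<forall>i\<in>{0..<s}. \<forall>j\<in>{0..<s}. (f i \<subseteq> f j) = (i \<le> j)" using ford by auto
  qed simp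
  moreover have "monochromatic c (f ` {0..<s})"
    unfolding monochromatic_def f_def using Pa gN by auto
  ultimately show ?thesis by blast
qed

lemma perm_prefix_count:
  assumes Y: "Y \<subseteq> {1..(N::nat)}"
  shows "fact (card Y) * fact (N - card Y) \<le>
    card {xs \<in> permutations_of_set {1..N}. set (take (card Y) xs) = Y}"
proof -
  define U where "U = {1..N}"
  have fY: "finite Y" using Y finite_subset by blast
  define h where "h = (\<lambda>p::nat list \<times> nat list. fst p @ snd p)"
  define D where "D = permutations_of_set Y \<times> permutations_of_set (U - Y)"
  have img: "h ` D \<subseteq> {xs \<in> permutations_of_set U. set (take (card Y) xs) = Y}"
  proof
    fix xs assume "xs \<in> h ` D"
    then obtain ys zs where yz: "ys \<in> permutations_of_set Y" "zs \<in> permutations_of_set (U - Y)"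
      and xs: "xs = ys @ zs" unfolding D_def h_def by auto
    have ly: "length ys = card Y" using yz(1) by (rule length_finite_permutations_of_set)
    have sy: "set ys = Y" "distinct ys" using yz(1) unfolding permutations_of_set_def by auto
    have sz: "set zs = U - Y" "distinct zs" using yz(2) unfolding permutations_of_set_def by auto
    have "set xs = U" using sy sz Y unfolding xs U_def by auto
    moreover have "distinct xs" using sy sz unfolding xs by auto
    moreover have "take (card Y) xs = ys" using ly unfolding xs by simp
    ultimately show "xs \<in> {xs \<in> permutations_of_set U. set (take (card Y) xs) = Y}"
      using sy unfolding permutations_of_set_def by auto
  qed
  have inj: "inj_on h D"
  proof (rule inj_onI)
    fix p q assume p: "p \<in> D" and q: "q \<in> D" and e: "h p = h q"
    have "length (fst p) = card Y" "length (fst q) = card Y"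
      using p q unfolding D_def by (auto intro: length_finite_permutations_of_set)
    then have "fst p = fst q \<and> snd p = snd q"
      using e unfolding h_def using append_eq_append_conv by metis
    then show "p = q" by (simp add: prod_eq_iff)
  qed
  have fU: "finite (U - Y)" unfolding U_def by simp
  have cD: "card D = fact (card Y) * fact (N - card Y)"
    unfolding D_def using fY fU Y by (simp add: card_cartesian_product card_Diff_subset U_def)
  have "card (h ` D) \<le> card {xs \<in> permutations_of_set U. set (take (card Y) xs) = Y}"
    by (rule card_mono[OF _ img]) simp
  then show ?thesis using card_image[OF inj] cD unfolding U_def by simp
qed

lemma antichain_bound:
  assumes A: "A \<subseteq> Pow {1..(N::nat)}"
    and anti: "\<And>P Q. P \<in> A \<Longrightarrow> Q \<in> A \<Longrightarrow> P \<subseteq> Q \<Longrightarrow> P = Q"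
    and bnd: "\<And>m. m \<le> N \<Longrightarrow> N choose m \<le> B"
  shows "card A \<le> B"
proof -
  define S where "S = (\<lambda>Y. {xs \<in> permutations_of_set {1..N}. set (take (card Y) xs) = Y})"
  have fA: "finite A" using A by (rule finite_subset) simp
  have fS: "\<And>Y. finite (S Y)" unfolding S_def by simp
  have disj: "\<forall>Y\<in>A. \<forall>Z\<in>A. Y \<noteq> Z \<longrightarrow> S Y \<inter> S Z = {}"
  proof (intro ballI impI)
    fix Y Z assume Y: "Y \<in> A" and Z: "Z \<in> A" and ne: "Y \<noteq> Z"
    show "S Y \<inter> S Z = {}"
    proof (rule ccontr)
      assume "S Y \<inter> S Z \<noteq> {}"
      then obtain xs where "set (take (card Y) xs) = Y" "set (take (card Z) xs) = Z"
        unfolding S_def by auto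
      moreover have "card Y \<le> card Z \<or> card Z \<le> card Y" by linarith
      ultimately have "Y \<subseteq> Z \<or> Z \<subseteq> Y" using set_take_subset_set_take[of "card Y" "card Z" xs]
         set_take_subset_set_take[of "card Z" "card Y" xs] by auto
      then show False using anti Y Z ne by blast
    qed
  qed
  have "sum (\<lambda>Y. card (S Y)) A = card (\<Union>Y\<in>A. S Y)"
    by (rule card_UN_disjoint[symmetric, OF fA]) (use fS disj in auto)
  also have "\<dots> \<le> card (permutations_of_set {1..N})"
    by (rule card_mono) (auto simp: S_def)
  also have "\<dots> = fact N" by simp
  finally have sumS: "sum (\<lambda>Y. card (S Y)) A \<le> fact N" .
  have each: "fact N \<le> B * card (S Y)" if Y: "Y \<in> A" for Y
  proof -
    have Ys: "Y \<subseteq> {1..N}" using A Y by auto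
    have "card Y \<le> card {1..N}" by (rule card_mono[OF _ Ys]) simp
    then have cY: "card Y \<le> N" by simp
    have "fact N = fact (card Y) * fact (N - card Y) * (N choose card Y)"
      by (rule binomial_fact_lemma[OF cY, symmetric])
    also have "\<dots> \<le> card (S Y) * B"
      unfolding S_def by (rule mult_le_mono[OF perm_prefix_count[OF Ys] bnd[OF cY]])
    finally have "fact N \<le> card (S Y) * B" .
    then show ?thesis by (simp only: mult.commute)
  qed
  have "card A * fact N = sum (\<lambda>Y. fact N) A" by simp
  also have "\<dots> \<le> sum (\<lambda>Y. B * card (S Y)) A" by (rule sum_mono) (rule each)
  also have "\<dots> = B * sum (\<lambda>Y. card (S Y)) A" by (simp add: sum_distrib_left)
  also have "\<dots> \<le> B * fact N" using sumS by simp
  finally have "card A * fact N \<le> B * fact N" .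
  then show ?thesis using fact_gt_zero[where 'a=nat, of N] by simp
qed

lemma chain_cards:
  assumes "induced_chain_copy t N F"
  obtains f where "F = f ` {0..<t}" "inj_on f {0..<t}" "\<And>i. i < t \<Longrightarrow> f i \<subseteq> {1..N}"
    "\<And>i j. i < t \<Longrightarrow> j < t \<Longrightarrow> i < j \<Longrightarrow> card (f i) < card (f j)"
proof -
  obtain f where f: "inj_on f {0..<t}" "f ` {0..<t} \<subseteq> boolean_lattice N"
    "\<forall>i\<in>{0..<t}. \<forall>j\<in>{0..<t}. (f i \<subseteq> f j \<longleftrightarrow> i \<le> j)" "F = f ` {0..<t}"
    using assms unfolding induced_chain_copy_def by blast
  have sub: "\<And>i. i < t \<Longrightarrow> f i \<subseteq> {1..N}"
  proof -
    fix i assume "i < t"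
    then have "f i \<in> f ` {0..<t}" by auto
    then show "f i \<subseteq> {1..N}" using f(2) unfolding boolean_lattice_def by blast
  qed
  have lt: "card (f i) < card (f j)" if ij: "i < t" "j < t" "i < j" for i j
  proof -
    have "f i \<subseteq> f j" using f(3) ij by auto
    moreover have "f i \<noteq> f j"
    proof
      assume "f i = f j"
      then have "i = j" using inj_onD[OF f(1)] ij by auto
      then show False using ij by simp
    qed
    ultimately have "f i \<subset> f j" by auto
    moreover have "finite (f j)" using sub[OF ij(2)] finite_subset by blast
    ultimately show ?thesis by (rule psubset_card_mono[rotated])
  qed
  show ?thesis by (rule that[OF f(4) f(1) sub lt])
qed

lemma lower_bound:
  assumes s: "s \<ge> 3" and k: "k \<ge> 3" and kB: "k \<le> ((s - 1) choose (s div 2)) + 1"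
  shows "\<not> GR_prop k 3 s (s - 1)"
proof -
  define N where "N = s - 1"
  define m where "m = s div 2"
  have m1: "1 \<le> m" "m < s" using s unfolding m_def by auto
  define Lay where "Lay = {X. X \<subseteq> {1..N} \<and> card X = m}"
  have cLay: "card Lay = N choose m" unfolding Lay_def using n_subsets[of "{1..N}" m] by simp
  have fLay: "finite Lay" unfolding Lay_def by simp
  obtain h where h: "bij_betw h Lay {0..<card Lay}" using ex_bij_betw_finite_nat[OF fLay] by blast
  define col where "col = (\<lambda>X. if card X = m then 2 + min (h X) (k - 2) else 1)"
  have ex: "exact_coloring k N col"
    unfolding exact_coloring_def
  proof (intro conjI ballI)
    fix X show "col X \<in> {1..k}" unfolding col_def using k by auto
  next
    fix i assume i: "i \<in> {1..k}"
    show "\<exists>X\<in>boolean_lattice N. col X = i"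
    proof (cases "i = 1")
      case True
      have "col {} = 1" unfolding col_def using m1 by auto
      then show ?thesis using True unfolding boolean_lattice_def by blast
    next
      case False
      have "i - 2 < card Lay" using i False kB unfolding cLay N_def m_def by auto
      then have "i - 2 \<in> h ` Lay" using bij_betw_imp_surj_on[OF h] by auto
      then obtain X where X: "X \<in> Lay" "h X = i - 2" by auto
      have "col X = i" using X i False unfolding col_def Lay_def by auto
      moreover have "X \<in> boolean_lattice N" using X unfolding Lay_def boolean_lattice_def by auto
      ultimately show ?thesis by blast
    qed
  qed
  have col1: "col X = 1" if "card X \<noteq> m" for X using that unfolding col_def by simp
  have col2: "col X \<noteq> 1" if "card X = m" for X using that unfolding col_def by simp
  have nr: "\<not> (\<exists>F. induced_chain_copy 3 N F \<and> rainbow col F)"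
  proof
    assume "\<exists>F. induced_chain_copy 3 N F \<and> rainbow col F"
    then obtain F where F: "induced_chain_copy 3 N F" "rainbow col F" by blast
    obtain f where f: "F = f ` {0..<3::nat}" "inj_on f {0..<3::nat}"
      "\<And>i j. i < (3::nat) \<Longrightarrow> j < 3 \<Longrightarrow> i < j \<Longrightarrow> card (f i) < card (f j)"
      using chain_cards[OF F(1)] by metis
    have c01: "card (f 0) < card (f 1)" and c12: "card (f 1) < card (f 2)" using f(3) by auto
    have inF: "f 0 \<in> F" "f 1 \<in> F" "f 2 \<in> F" using f(1) by auto
    have rb: "\<And>A B. A \<in> F \<Longrightarrow> B \<in> F \<Longrightarrow> A \<noteq> B \<Longrightarrow> col A \<noteq> col B"
      using F(2) unfolding rainbow_def by blast
    show False
    proof (cases "card (f 0) = m")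
      case True
      have a1: "card (f 1) \<noteq> m" using True c01 by linarith
      have a2: "card (f 2) \<noteq> m" using True c01 c12 by linarith
      have ne: "f 1 \<noteq> f 2"
      proof
        assume "f 1 = f 2"
        then have "card (f 1) = card (f 2)" by (rule arg_cong)
        then show False using c12 by linarith
      qed
      have c1: "col (f 1) = 1" using col1[OF a1] .
      have c2: "col (f 2) = 1" using col1[OF a2] .
      have eq: "col (f 1) = col (f 2)" unfolding c1 c2 by (rule refl)
      show False using rb[OF inF(2) inF(3) ne] eq by (rule notE)
    next
      case F0: False
      show False
      proof (cases "card (f 1) = m")
        case True
        have a2: "card (f 2) \<noteq> m" using True c12 by linarith
        have ne: "f 0 \<noteq> f 2"
        proof
          assume "f 0 = f 2"
          then have "card (f 0) = card (f 2)" by (rule arg_cong)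
          then show False using c01 c12 by linarith
        qed
        have c1: "col (f 0) = 1" using col1[OF F0] .
        have c2: "col (f 2) = 1" using col1[OF a2] .
        have eq: "col (f 0) = col (f 2)" unfolding c1 c2 by (rule refl)
        show False using rb[OF inF(1) inF(3) ne] eq by (rule notE)
      next
        case False
        have ne: "f 0 \<noteq> f 1"
        proof
          assume "f 0 = f 1"
          then have "card (f 0) = card (f 1)" by (rule arg_cong)
          then show False using c01 by linarith
        qed
        have c1: "col (f 0) = 1" using col1[OF F0] .
        have c2: "col (f 1) = 1" using col1[OF False] .
        have eq: "col (f 0) = col (f 1)" unfolding c1 c2 by (rule refl)
        show False using rb[OF inF(1) inF(2) ne] eq by (rule notE)
      qed
    qed
  qed
  have nm: "\<not> (\<exists>F. induced_chain_copy s N F \<and> monochromatic col F)"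
  proof
    assume "\<exists>F. induced_chain_copy s N F \<and> monochromatic col F"
    then obtain F where F: "induced_chain_copy s N F" "monochromatic col F" by blast
    obtain f where f: "F = f ` {0..<s}" "\<And>i. i < s \<Longrightarrow> f i \<subseteq> {1..N}"
      "\<And>i j. i < s \<Longrightarrow> j < s \<Longrightarrow> i < j \<Longrightarrow> card (f i) < card (f j)"
      using chain_cards[OF F(1)] by metis
    define g where "g = (\<lambda>i. card (f i))"
    have ginj: "inj_on g {0..<s}"
    proof (rule inj_onI)
      fix i j assume "i \<in> {0..<s}" "j \<in> {0..<s}" "g i = g j"
      then show "i = j" using f(3)[of i j] f(3)[of j i] unfolding g_def
        by (metis atLeastLessThan_iff less_irrefl linorder_neqE_nat)
    qed
    have gsub: "g ` {0..<s} \<subseteq> {0..<s}"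
    proof
      fix y assume "y \<in> g ` {0..<s}"
      then obtain i where i: "i < s" "y = g i" by auto
      have "card (f i) \<le> card {1..N}" by (rule card_mono[OF _ f(2)[OF i(1)]]) simp
      then show "y \<in> {0..<s}" using i s unfolding g_def N_def by auto
    qed
    have "g ` {0..<s} = {0..<s}"
      by (rule card_subset_eq) (use gsub card_image[OF ginj] in auto)
    then obtain i where i: "i < s" "g i = m" using m1 by (metis atLeastLessThan_iff imageE zero_le)
    define j where "j = (if i = 0 then 1 else 0::nat)"
    have j: "j < s" "j \<noteq> i" using s unfolding j_def by auto
    have "g j \<noteq> m" using ginj i j unfolding inj_on_def by (metis atLeastLessThan_iff zero_le)
    then have "col (f j) = 1" "col (f i) \<noteq> 1" using col1 col2 i unfolding g_def by auto
    moreover have "f i \<in> F" "f j \<in> F" using f(1) i j by auto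
    ultimately show False using F(2) unfolding monochromatic_def by metis
  qed
  show ?thesis unfolding GR_prop_def N_def[symmetric] using ex nr nm by blast
qed

lemma ceil_half:
  assumes "s \<ge> (1::nat)"
  shows "nat \<lceil>real (s - 1) / 2\<rceil> = s div 2"
proof -
  define q where "q = s div 2"
  have sq: "s = 2 * q + s mod 2" unfolding q_def by simp
  have "\<lceil>real (s - 1) / 2\<rceil> = int q"
  proof (cases "s mod 2 = 0")
    case True
    then have s2: "s = 2 * q" using sq by simp
    then have q1: "q \<ge> 1" using assms by simp
    have "real (s - 1) = 2 * real q - 1" using s2 q1 by (simp add: of_nat_diff)
    then have e: "real (s - 1) / 2 = real q - 1 / 2" by simp
    show ?thesis unfolding e by (rule ceiling_unique) simp_all
  next
    case False
    then have s2: "s = 2 * q + 1" using sq by simp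
    have "real (s - 1) = 2 * real q" using s2 by simp
    then have e: "real (s - 1) / 2 = real q" by simp
    show ?thesis unfolding e by simp
  qed
  then show ?thesis unfolding q_def by simp
qed

lemma binom_bound:
  assumes "N \<le> s - 1"
  shows "N choose j \<le> (s - 1) choose (s div 2)"
proof -
  have e: "(s - 1) choose (s div 2) = (s - 1) choose ((s - 1) div 2)"
  proof (cases "even s")
    case True
    show ?thesis
    proof (cases "s = 0")
      case False
      then have "s div 2 \<le> s - 1" "(s - 1) - s div 2 = (s - 1) div 2" using True by (auto elim!: evenE)
      then show ?thesis using binomial_symmetric[of "s div 2" "s - 1"] by simp
    qed simp
  next
    case False
    then have "s div 2 = (s - 1) div 2" by (auto elim!: oddE)
    then show ?thesis by simp
  qed
  have "N choose j \<le> (s - 1) choose j" by (rule binomial_right_mono[OF assms])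
  also have "\<dots> \<le> (s - 1) choose ((s - 1) div 2)" by (rule binomial_maximum)
  finally show ?thesis using e by simp
qed

lemma big_N:
  assumes k: "k \<ge> 3" and sN: "s \<le> N"
  shows "GR_prop k 3 s N"
  unfolding GR_prop_def
proof (intro allI impI)
  fix c assume ex: "exact_coloring k N c"
  show "(\<exists>F. induced_chain_copy 3 N F \<and> rainbow c F) \<or> (\<exists>F. induced_chain_copy s N F \<and> monochromatic c F)"
  proof (cases "\<exists>F. induced_chain_copy 3 N F \<and> rainbow c F")
    case True then show ?thesis by (rule disjI1)
  next
    case False
    have top: "c {} = c {1..N}" by (rule struct1[OF ex k False])
    have comp: "\<And>P Q. P \<subset> Q \<Longrightarrow> Q \<subseteq> {1..N} \<Longrightarrow> c P \<noteq> c {} \<Longrightarrow> c Q \<noteq> c {} \<Longrightarrow> c P = c Q"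
      by (rule struct2[OF False])
    show ?thesis by (rule disjI2, rule mono_chain[OF ex k top comp sN])
  qed
qed

lemma small_N:
  assumes k: "k \<ge> 3" and kB: "B + 1 < k" and bnd: "\<And>j. j \<le> N \<Longrightarrow> N choose j \<le> B"
  shows "GR_prop k 3 s N"
  unfolding GR_prop_def
proof (intro allI impI)
  fix c assume ex: "exact_coloring k N c"
  show "(\<exists>F. induced_chain_copy 3 N F \<and> rainbow c F) \<or> (\<exists>F. induced_chain_copy s N F \<and> monochromatic c F)"
  proof (cases "\<exists>F. induced_chain_copy 3 N F \<and> rainbow c F")
    case True then show ?thesis by (rule disjI1)
  next
    case False
    have comp: "\<And>P Q. P \<subset> Q \<Longrightarrow> Q \<subseteq> {1..N} \<Longrightarrow> c P \<noteq> c {} \<Longrightarrow> c Q \<noteq> c {} \<Longrightarrow> c P = c Q"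
      by (rule struct2[OF False])
    define a where "a = c {}"
    have surj: "\<forall>i\<in>{1..k}. \<exists>X\<in>Pow {1..N}. c X = i"
      using ex unfolding exact_coloring_def boolean_lattice_def by (rule conjunct2)
    have inr: "\<forall>X\<in>Pow {1..N}. c X \<in> {1..k}"
      using ex unfolding exact_coloring_def boolean_lattice_def by (rule conjunct1)
    have aK: "a \<in> {1..k}" using inr unfolding a_def by auto
    define C where "C = {1..k} - {a}"
    define rep where "rep = (\<lambda>i. SOME X. X \<in> Pow {1..N} \<and> c X = i)"
    have rep: "rep i \<in> Pow {1..N} \<and> c (rep i) = i" if "i \<in> {1..k}" for i
    proof -
      have "\<exists>X. X \<in> Pow {1..N} \<and> c X = i" using bspec[OF surj that] by blast
      then show ?thesis unfolding rep_def by (rule someI_ex)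
    qed
    have injr: "inj_on rep C"
    proof (rule inj_onI)
      fix i j assume ij: "i \<in> C" "j \<in> C" "rep i = rep j"
      have "i \<in> {1..k}" "j \<in> {1..k}" using ij(1,2) unfolding C_def by auto
      then have "c (rep i) = i" "c (rep j) = j" using rep by blast+
      then show "i = j" using ij(3) by metis
    qed
    have cC: "card C = k - 1" unfolding C_def using aK by simp
    have A: "rep ` C \<subseteq> Pow {1..N}"
    proof
      fix X assume "X \<in> rep ` C"
      then obtain i where i: "i \<in> C" "X = rep i" by blast
      have "i \<in> {1..k}" using i(1) unfolding C_def by blast
      then show "X \<in> Pow {1..N}" using rep i(2) by blast
    qed
    have anti: "P = Q" if P: "P \<in> rep ` C" and Q: "Q \<in> rep ` C" and PQ: "P \<subseteq> Q" for P Q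
    proof (rule ccontr)
      assume ne: "P \<noteq> Q"
      obtain i where i: "i \<in> C" "P = rep i" using P by auto
      obtain j where j: "j \<in> C" "Q = rep j" using Q by auto
      have ri: "rep i \<in> Pow {1..N}" "c (rep i) = i" using rep[of i] i unfolding C_def by auto
      have rj: "rep j \<in> Pow {1..N}" "c (rep j) = j" using rep[of j] j unfolding C_def by auto
      have "P \<subset> Q" using PQ ne by auto
      moreover have "Q \<subseteq> {1..N}" using rj j by auto
      moreover have "c P \<noteq> c {}" "c Q \<noteq> c {}" using ri rj i j unfolding C_def a_def by auto
      ultimately have "c P = c Q" by (rule comp)
      then have "i = j" using ri rj i j by simp
      then show False using ne i j by simp
    qed
    have "card (rep ` C) \<le> B" by (rule antichain_bound[OF A anti bnd]) auto
    moreover have "card (rep ` C) = k - 1" using card_image[OF injr] cC by simp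
    ultimately show ?thesis using kB by simp
  qed
qed

theorem theorem1p2:
  fixes k s :: nat
  assumes "k \<ge> 3" and "s \<ge> 3"
  shows "(k \<le> ((s - 1) choose (nat \<lceil>real (s - 1) / 2\<rceil>)) + 1 \<longrightarrow>
            \<not> chain_good k 3 s \<and> GR_chain k 3 s = s)
       \<and> (k > ((s - 1) choose (nat \<lceil>real (s - 1) / 2\<rceil>)) + 1 \<longrightarrow>
            chain_good k 3 s)"
proof -
  have ce: "nat \<lceil>real (s - 1) / 2\<rceil> = s div 2" using assms(2) by (intro ceil_half) simp
  define B where "B = (s - 1) choose (s div 2)"
  have big: "\<And>N. s \<le> N \<Longrightarrow> GR_prop k 3 s N" using big_N[OF assms(1)] by blast
  have P1: "\<not> chain_good k 3 s \<and> GR_chain k 3 s = s" if kB: "k \<le> B + 1"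
  proof
    have lb: "\<not> GR_prop k 3 s (s - 1)" using lower_bound[OF assms(2) assms(1)] kB unfolding B_def by blast
    show "\<not> chain_good k 3 s"
    proof
      assume "chain_good k 3 s"
      moreover have "s - 1 \<ge> 1" using assms(2) by simp
      ultimately have "GR_prop k 3 s (s - 1)" unfolding chain_good_def by blast
      then show False using lb by simp
    qed
    show "GR_chain k 3 s = s" unfolding GR_chain_def
    proof (rule Least_equality)
      show "\<forall>N\<ge>s. N \<ge> 1 \<longrightarrow> GR_prop k 3 s N" using big by blast
    next
      fix n assume h: "\<forall>N\<ge>n. N \<ge> 1 \<longrightarrow> GR_prop k 3 s N"
      show "s \<le> n"
      proof (rule ccontr)
        assume "\<not> s \<le> n"
        then have "n \<le> s - 1" by simp
        moreover have "s - 1 \<ge> 1" using assms(2) by simp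
        ultimately have "GR_prop k 3 s (s - 1)" using h by blast
        then show False using lb by simp
      qed
    qed
  qed
  have P2: "chain_good k 3 s" if kB: "k > B + 1"
    unfolding chain_good_def
  proof (intro allI impI)
    fix N :: nat assume "N \<ge> 1"
    show "GR_prop k 3 s N"
    proof (cases "s \<le> N")
      case True then show ?thesis by (rule big)
    next
      case False
      then have "N \<le> s - 1" by simp
      then have "\<And>j. j \<le> N \<Longrightarrow> N choose j \<le> B" unfolding B_def using binom_bound by blast
      then show ?thesis using small_N[OF assms(1)] kB by blast
    qed
  qed
  show ?thesis unfolding ce B_def[symmetric] using P1 P2 by blast
qed

end
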